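(* In a finite dynamic game as described in the context, if $K^i$ is unilaterally sufficient information for player $i$, then for every behavioral strategy profile $g^{-i}$ of the players other than $i$, $K^i$ is an information state under $g^{-i}$ for the payoffs of all players $\mathcal{I}$: there exist functions $P_t^{i,g^{-i}}:\mathcal{K}_t^i\times\mathcal{U}_t^i\to\Delta(\mathcal{K}_{t+1}^i)$ and $r_t^{j,g^{-i}}:\mathcal{K}_t^i\times\mathcal{U}_t^i\to[-1,1]$ ($j\in\mathcal{I}$), not depending on $g^i$, such that $\Pr^{g^i,g^{-i}}(k_{t+1}^i\mid h_t^i,u_t^i)=P_t^{i,g^{-i}}(k_{t+1}^i\mid k_t^i,u_t^i)$ for all $t<T$ and $\mathbb{E}^{g^i,g^{-i}}[R_t^j\mid h_t^i,u_t^i]=r_t^{j,g^{-i}}(k_t^i,u_t^i)$ for all $j\in\mathcal{I}$ and all $t$, for all behavioral strategies $g^i$ and all $(h_t^i,u_t^i)$ admissible under $(g^i,g^{-i})$.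
   Context: Game model: finite set of players $\mathcal{I}$, times $\mathcal{T}=\{1,\dots,T\}$. At time $t$ each player $i$ takes action $U_t^i\in\mathcal{U}_t^i$, obtains reward $R_t^i\in[-1,1]$ and learns new information $Z_t^i\in\mathcal{Z}_t^i$. There is a state $X_t\in\mathcal{X}_t$ with $(X_{t+1},Z_t,R_t)=f_t(X_t,U_t,W_t)$ for fixed functions $f_t$. Primitive random variables $(X_1,H_1)$ and $W_1,\dots,W_T$ are mutually independent with commonly known distributions. All sets are finite. Perfect recall: $H_t^i=(H_1^i,Z_{1:t-1}^i)\in\mathcal{H}_t^i$, and $U_t^i$ is a component of $Z_t^i$. Behavioral strategy $g_t^i:\mathcal{H}_t^i\to\Delta(\mathcal{U}_t^i)$. A realization is admissible under a (partial) profile if it has positive probability under some completion of it. Compression: $K_1^i=\iota_1^i(H_1^i)$, $K_t^i=\iota_t^i(K_{t-1}^i,Z_{t-1}^i)$ for fixed maps, finite value sets $\mathcal{K}_t^i$; $k_t^i$ is the compression of $h_t^i$. Unilaterally sufficient information (USI): $K^i$ is USI for player $i$ if there exist $F_t^{i,g^i}:\mathcal{K}_t^i\to\Delta(\mathcal{H}_t^i)$ depending only on $g^i$ and $\Phi_t^{i,g^{-i}}:\mathcal{K}_t^i\to\Delta(\mathcal{X}_t\times\mathcal{H}_t^{-i})$ depending only on $g^{-i}$ with $\Pr^g(x_t,h_t\mid k_t^i)=F_t^{i,g^i}(h_t^i\mid k_t^i)\Phi_t^{i,g^{-i}}(x_t,h_t^{-i}\mid k_t^i)$ for all behavioral profiles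 $g$, all $t$, all $k_t^i$ admissible under $g$ (with $x_t,h_t^i,h_t^{-i}$ ranging independently; the left side is $0$ if they disagree on shared components). *)

theory Defs
  imports "HOL-Probability.Probability"
begin

text \<open>Finite dynamic game. Times are 1..horizon. Each player i has private initial
information H_1^i of type 'h; the history of player i at time t is
(H_1^i, [Z_1^i, ..., Z_{t-1}^i]).\<close>

record ('p, 'x, 'h, 'w, 'u, 'z) game =
  horizon :: nat
  init    :: "('x \<times> ('p \<Rightarrow> 'h)) pmf"
  noise   :: "nat \<Rightarrow> 'w pmf"
  dyn     :: "nat \<Rightarrow> 'x \<Rightarrow> ('p \<Rightarrow> 'u) \<Rightarrow> 'w \<Rightarrow> 'x \<times> ('p \<Rightarrow> 'z) \<times> ('p \<Rightarrow> real)"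
                                                  \<comment> \<open>(X_{t+1}, Z_t, R_t) = f_t(X_t,U_t,W_t)\<close>
  acts    :: "'p \<Rightarrow> nat \<Rightarrow> 'u set"
  act_of  :: "'p \<Rightarrow> nat \<Rightarrow> 'z \<Rightarrow> 'u"           \<comment> \<open>the U_t^i component of Z_t^i\<close>

type_synonym ('h, 'z) hist = "'h \<times> 'z list"

type_synonym ('p, 'h, 'z, 'u) profile = "'p \<Rightarrow> nat \<Rightarrow> ('h, 'z) hist \<Rightarrow> 'u pmf"

definition valid_strat ::
  "('p, 'x, 'h, 'w, 'u, 'z) game \<Rightarrow> 'p \<Rightarrow> (nat \<Rightarrow> ('h, 'z) hist \<Rightarrow> 'u pmf) \<Rightarrow> bool" where
  "valid_strat G i gi \<longleftrightarrow> (\<forall>t\<in>{1..horizon G}. \<forall>h. set_pmf (gi t h) \<subseteq> acts G i t)"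

definition init_state :: "('p, 'x, 'h, 'w, 'u, 'z) game \<Rightarrow> ('x \<times> ('p \<Rightarrow> ('h, 'z) hist)) pmf" where
  "init_state G = map_pmf (\<lambda>(x, h1). (x, \<lambda>i. (h1 i, []))) (init G)"

definition joint_actions ::
  "('p, 'h, 'z, 'u) profile \<Rightarrow> nat \<Rightarrow> ('p \<Rightarrow> ('h, 'z) hist) \<Rightarrow> ('p \<Rightarrow> 'u) pmf" where
  "joint_actions g t H = Pi_pmf UNIV undefined (\<lambda>i. g i t (H i))"

definition stage_of ::
  "('p, 'x, 'h, 'w, 'u, 'z) game \<Rightarrow> ('p, 'h, 'z, 'u) profile \<Rightarrow> nat \<Rightarrow>
   ('x \<times> ('p \<Rightarrow> ('h, 'z) hist)) pmf \<Rightarrow>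
   (('x \<times> ('p \<Rightarrow> ('h, 'z) hist)) \<times> ('p \<Rightarrow> 'u) \<times> 'w) pmf" where
  "stage_of G g t D =
     bind_pmf D (\<lambda>s. bind_pmf (joint_actions g t (snd s))
       (\<lambda>u. bind_pmf (noise G t) (\<lambda>w. return_pmf (s, u, w))))"

definition next_state ::
  "('p, 'x, 'h, 'w, 'u, 'z) game \<Rightarrow> nat \<Rightarrow>
   (('x \<times> ('p \<Rightarrow> ('h, 'z) hist)) \<times> ('p \<Rightarrow> 'u) \<times> 'w) \<Rightarrow> 'x \<times> ('p \<Rightarrow> ('h, 'z) hist)" where
  "next_state G t \<omega> = (case \<omega> of ((x, H), u, w) \<Rightarrow>
     (case dyn G t x u w of (x', z, r) \<Rightarrow> (x', \<lambda>i. (fst (H i), snd (H i) @ [z i]))))"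

text \<open>Law of (X_t, H_t) under profile g (meaningful for t \<ge> 1).\<close>
primrec state_dist ::
  "('p, 'x, 'h, 'w, 'u, 'z) game \<Rightarrow> ('p, 'h, 'z, 'u) profile \<Rightarrow> nat \<Rightarrow>
   ('x \<times> ('p \<Rightarrow> ('h, 'z) hist)) pmf" where
  "state_dist G g 0 = init_state G"
| "state_dist G g (Suc n) =
     (if n = 0 then init_state G else map_pmf (next_state G n) (stage_of G g n (state_dist G g n)))"

definition stage_dist ::
  "('p, 'x, 'h, 'w, 'u, 'z) game \<Rightarrow> ('p, 'h, 'z, 'u) profile \<Rightarrow> nat \<Rightarrow>
   (('x \<times> ('p \<Rightarrow> ('h, 'z) hist)) \<times> ('p \<Rightarrow> 'u) \<times> 'w) pmf" where
  "stage_dist G g t = stage_of G g t (state_dist G g t)"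

definition Zt :: "('p, 'x, 'h, 'w, 'u, 'z) game \<Rightarrow> nat \<Rightarrow>
   (('x \<times> ('p \<Rightarrow> ('h, 'z) hist)) \<times> ('p \<Rightarrow> 'u) \<times> 'w) \<Rightarrow> 'p \<Rightarrow> 'z" where
  "Zt G t \<omega> = (case \<omega> of ((x, H), u, w) \<Rightarrow> fst (snd (dyn G t x u w)))"

definition Rt :: "('p, 'x, 'h, 'w, 'u, 'z) game \<Rightarrow> nat \<Rightarrow>
   (('x \<times> ('p \<Rightarrow> ('h, 'z) hist)) \<times> ('p \<Rightarrow> 'u) \<times> 'w) \<Rightarrow> 'p \<Rightarrow> real" where
  "Rt G t \<omega> = (case \<omega> of ((x, H), u, w) \<Rightarrow> snd (snd (dyn G t x u w)))"

text \<open>Compression: K_1 = iota_1(H_1), K_t = iota_t(K_{t-1}, Z_{t-1}).\<close>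
fun kfold :: "('p \<Rightarrow> nat \<Rightarrow> 'k \<Rightarrow> 'z \<Rightarrow> 'k) \<Rightarrow> 'p \<Rightarrow> nat \<Rightarrow> 'k \<Rightarrow> 'z list \<Rightarrow> 'k" where
  "kfold io i t k [] = k"
| "kfold io i t k (z # zs) = kfold io i (Suc t) (io i t k z) zs"

definition compress ::
  "('p \<Rightarrow> 'h \<Rightarrow> 'k) \<Rightarrow> ('p \<Rightarrow> nat \<Rightarrow> 'k \<Rightarrow> 'z \<Rightarrow> 'k) \<Rightarrow> 'p \<Rightarrow> ('h, 'z) hist \<Rightarrow> 'k" where
  "compress io1 io i h = kfold io i 2 (io1 i (fst h)) (snd h)"

text \<open>Unilaterally sufficient information. h^{-i} is represented by the profile of
histories with the i-th entry blanked out (set to undefined).\<close>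
definition usi ::
  "('p, 'x, 'h, 'w, 'u, 'z) game \<Rightarrow> ('p \<Rightarrow> 'h \<Rightarrow> 'k) \<Rightarrow> ('p \<Rightarrow> nat \<Rightarrow> 'k \<Rightarrow> 'z \<Rightarrow> 'k) \<Rightarrow> 'p \<Rightarrow> bool" where
  "usi G io1 io i \<longleftrightarrow>
    (\<exists>(F :: (nat \<Rightarrow> ('h, 'z) hist \<Rightarrow> 'u pmf) \<Rightarrow> nat \<Rightarrow> 'k \<Rightarrow> ('h, 'z) hist pmf)
      (\<Phi> :: ('p, 'h, 'z, 'u) profile \<Rightarrow> nat \<Rightarrow> 'k \<Rightarrow> ('x \<times> ('p \<Rightarrow> ('h, 'z) hist)) pmf).
      \<forall>g. (\<forall>j. valid_strat G j (g j)) \<longrightarrow>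
        (\<forall>t\<in>{1..horizon G}. \<forall>k.
           let D = state_dist G g t; A = {s. compress io1 io i (snd s i) = k} in
           measure_pmf.prob D A > 0 \<longrightarrow>
           (\<forall>x H. pmf (cond_pmf D A) (x, H)
                  = pmf (F (g i) t k) (H i) * pmf (\<Phi> (g(i := undefined)) t k) (x, H(i := undefined)))))"

text \<open>K^i is an information state under g^{-i} for the payoffs of all players.
The profile gmi carries g^{-i} (its i-th entry is irrelevant: it is overwritten by g^i).\<close>
definition info_state ::
  "('p, 'x, 'h, 'w, 'u, 'z) game \<Rightarrow> ('p \<Rightarrow> 'h \<Rightarrow> 'k) \<Rightarrow> ('p \<Rightarrow> nat \<Rightarrow> 'k \<Rightarrow> 'z \<Rightarrow> 'k) \<Rightarrow> 'p \<Rightarrow>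
   ('p, 'h, 'z, 'u) profile \<Rightarrow> bool" where
  "info_state G io1 io i gmi \<longleftrightarrow>
    (\<exists>(P :: nat \<Rightarrow> 'k \<Rightarrow> 'u \<Rightarrow> 'k pmf) (r :: 'p \<Rightarrow> nat \<Rightarrow> 'k \<Rightarrow> 'u \<Rightarrow> real).
      (\<forall>j t k u. \<bar>r j t k u\<bar> \<le> 1) \<and>
      (\<forall>gi. valid_strat G i gi \<longrightarrow>
        (\<forall>t\<in>{1..horizon G}. \<forall>h u.
           let D = stage_dist G (gmi(i := gi)) t;
               A = {\<omega>. snd (fst \<omega>) i = h \<and> fst (snd \<omega>) i = u};
               k = compress io1 io i h in
           measure_pmf.prob D A > 0 \<longrightarrow>
           ((t < horizon G \<longrightarrow>
               (\<forall>k'. measure_pmf.prob (cond_pmf D A)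
                        {\<omega>. compress io1 io i (fst h, snd h @ [Zt G t \<omega> i]) = k'}
                     = pmf (P t k u) k')) \<and>
            (\<forall>j. measure_pmf.expectation (cond_pmf D A) (\<lambda>\<omega>. Rt G t \<omega> j) = r j t k u)))))"

end

theory Submission
  imports Defs
begin

lemma kfold_snoc: "kfold io i t k (zs @ [z]) = io i (t + length zs) (kfold io i t k zs) z"
  by (induction zs arbitrary: t k) auto

lemma compress_snoc: "compress io1 io i (a, zs @ [z]) = io i (Suc (Suc (length zs))) (compress io1 io i (a, zs)) z"
  by (simp add: compress_def kfold_snoc)

lemma pmf_stage_of:
  "pmf (stage_of G g t S) (s, U, w) = pmf S s * pmf (joint_actions g t (snd s)) U * pmf (noise G t) w"
proof -
  have 1: "pmf (bind_pmf (noise G t) (\<lambda>w'. return_pmf (s', U', w'))) (s, U, w)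
     = (if s' = s \<and> U' = U then pmf (noise G t) w else 0)" for s' U'
    by (subst pmf_bind, subst integral_measure_pmf_real[where A="{w}"]) (auto simp: indicator_def)
  have 2: "pmf (bind_pmf (joint_actions g t (snd s')) (\<lambda>U'. bind_pmf (noise G t) (\<lambda>w'. return_pmf (s', U', w')))) (s, U, w)
     = (if s' = s then pmf (joint_actions g t (snd s)) U * pmf (noise G t) w else 0)" for s'
    by (subst pmf_bind, subst integral_measure_pmf_real[where A="{U}"]) (auto simp: 1 split: if_splits)
  show ?thesis unfolding stage_of_def
    by (subst pmf_bind, subst integral_measure_pmf_real[where A="{s}"]) (auto simp: 2 split: if_splits)
qed

lemma pmf_joint: "pmf (joint_actions g t H) (U::'p::finite \<Rightarrow> _) = (\<Prod>j\<in>UNIV. pmf (g j t (H j)) (U j))"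
  by (simp add: joint_actions_def pmf_Pi)

lemma set_stage_of: "\<omega> \<in> set_pmf (stage_of G g t S) \<Longrightarrow> fst \<omega> \<in> set_pmf S"
  by (auto simp: stage_of_def)

lemma length_state:
  "s \<in> set_pmf (state_dist G g t) \<Longrightarrow> length (snd (snd s j)) = t - 1"
proof (induction t arbitrary: s)
  case 0 then show ?case by (auto simp: init_state_def)
next
  case (Suc n)
  show ?case
  proof (cases "n = 0")
    case True with Suc show ?thesis by (auto simp: init_state_def)
  next
    case False
    with Suc.prems obtain \<omega> where om: "\<omega> \<in> set_pmf (stage_of G g n (state_dist G g n))" and s: "s = next_state G n \<omega>"
      by auto
    obtain x H U w where o: "\<omega> = ((x, H), U, w)" by (metis prod.collapse)
    have "(x, H) \<in> set_pmf (state_dist G g n)" using set_stage_of[OF om] o by simp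
    from Suc.IH[OF this] have "length (snd (H j)) = n - 1" by simp
    then show ?thesis using s o False by (auto simp: next_state_def split: prod.splits)
  qed
qed

lemma cond_transfer:
  fixes D :: "'a pmf" and E :: "'b pmf"
  assumes bij: "bij_betw \<tau> A B" and eq: "\<And>\<omega>. \<omega> \<in> A \<Longrightarrow> pmf D \<omega> = c * pmf E (\<tau> \<omega>)"
    and pos: "measure_pmf.prob D A > 0"
  shows "map_pmf \<tau> (cond_pmf D A) = cond_pmf E B"
proof -
  have "measure_pmf.prob D A = infsetsum (\<lambda>\<omega>. c * pmf E (\<tau> \<omega>)) A"
    unfolding measure_pmf_conv_infsetsum by (rule infsetsum_cong) (simp_all add: eq)
  also have "\<dots> = c * infsetsum (\<lambda>\<omega>. pmf E (\<tau> \<omega>)) A"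
    using abs_summable_on_reindex_bij_betw[OF bij, of "pmf E"] pmf_abs_summable
    by (intro infsetsum_cmult_right) blast
  also have "infsetsum (\<lambda>\<omega>. pmf E (\<tau> \<omega>)) A = measure_pmf.prob E B"
    unfolding measure_pmf_conv_infsetsum by (rule infsetsum_reindex_bij_betw[OF bij])
  finally have PA: "measure_pmf.prob D A = c * measure_pmf.prob E B" .
  have Bnn: "measure_pmf.prob E B \<ge> 0" by (rule measure_nonneg)
  have cpos: "c > 0" and Bpos: "measure_pmf.prob E B > 0"
    using pos PA Bnn by (auto simp: zero_less_mult_iff)
  have "measure_pmf.prob D A \<noteq> 0" using pos by simp
  then have ne1: "set_pmf D \<inter> A \<noteq> {}" by (simp add: measure_pmf_zero_iff)
  have "measure_pmf.prob E B \<noteq> 0" using Bpos by simp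
  then have ne2: "set_pmf E \<inter> B \<noteq> {}" by (simp add: measure_pmf_zero_iff)
  show ?thesis
  proof (rule pmf_eqI)
    fix b
    have "pmf (map_pmf \<tau> (cond_pmf D A)) b = infsetsum (pmf (cond_pmf D A)) (\<tau> -` {b})"
      by (simp add: pmf_map measure_pmf_conv_infsetsum)
    also have "\<dots> = infsetsum (pmf (cond_pmf D A)) (\<tau> -` {b} \<inter> A)"
      by (rule infsetsum_cong_neutral) (auto simp add: pmf_cond[OF ne1])
    also have "\<dots> = pmf (cond_pmf E B) b"
    proof (cases "b \<in> B")
      case True
      then obtain a where a: "a \<in> A" "\<tau> a = b" using bij by (auto simp: bij_betw_def)
      have "\<tau> -` {b} \<inter> A = {a}" using a bij by (auto simp: bij_betw_def inj_on_def)
      then have "infsetsum (pmf (cond_pmf D A)) (\<tau> -` {b} \<inter> A) = pmf (cond_pmf D A) a" by simp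
      also have "\<dots> = c * pmf E b / (c * measure_pmf.prob E B)"
        using a by (simp add: pmf_cond[OF ne1] eq PA)
      also have "\<dots> = pmf E b / measure_pmf.prob E B" using cpos by simp
      also have "\<dots> = pmf (cond_pmf E B) b" using True by (simp add: pmf_cond[OF ne2])
      finally show ?thesis .
    next
      case False
      then have "\<tau> -` {b} \<inter> A = {}" using bij by (auto simp: bij_betw_def)
      then show ?thesis using False by (simp add: pmf_cond[OF ne2])
    qed
    finally show "pmf (map_pmf \<tau> (cond_pmf D A)) b = pmf (cond_pmf E B) b" .
  qed
qed

theorem lemma4:
  fixes G :: "('p::finite, 'x::finite, 'h::finite, 'w::finite, 'u::finite, 'z::finite) game"
    and io1 :: "'p \<Rightarrow> 'h \<Rightarrow> 'k::finite"
    and io :: "'p \<Rightarrow> nat \<Rightarrow> 'k \<Rightarrow> 'z \<Rightarrow> 'k"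
    and i :: 'p
  assumes rewards_bounded:
      "\<forall>t\<in>{1..horizon G}. \<forall>x u w j. \<bar>snd (snd (dyn G t x u w)) j\<bar> \<le> 1"
    and action_in_info:
      "\<forall>t\<in>{1..horizon G}. \<forall>x u w j. act_of G j t (fst (snd (dyn G t x u w)) j) = u j"
    and USI: "usi G io1 io i"
  shows "\<forall>gmi :: ('p, 'h, 'z, 'u) profile.
           (\<forall>j. j \<noteq> i \<longrightarrow> valid_strat G j (gmi j)) \<longrightarrow> info_state G io1 io i gmi"
proof (intro allI impI)
  fix gmi :: "('p, 'h, 'z, 'u) profile"
  assume gv: "\<forall>j. j \<noteq> i \<longrightarrow> valid_strat G j (gmi j)"
  from USI obtain F \<Phi> where F\<Phi>: "\<forall>g. (\<forall>j. valid_strat G j (g j)) \<longrightarrow>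
        (\<forall>t\<in>{1..horizon G}. \<forall>k.
           let D = state_dist G g t; A = {s. compress io1 io i (snd s i) = k} in
           measure_pmf.prob D A > 0 \<longrightarrow>
           (\<forall>x H. pmf (cond_pmf D A) (x, H)
                  = pmf (F (g i) t k) (H i) * pmf (\<Phi> (g(i := undefined)) t k) (x, H(i := undefined))))"
    using USI unfolding usi_def by (elim exE) (rule that, assumption)
  define h0 :: "('h, 'z) hist" where "h0 = undefined"
  define E where "E t k u = stage_of G (gmi(i := (\<lambda>t h. return_pmf u))) t (\<Phi> (gmi(i:=undefined)) t k)"
    for t k u
  define B where "B u = {\<omega> :: ('x \<times> ('p \<Rightarrow> ('h, 'z) hist)) \<times> ('p \<Rightarrow> 'u) \<times> 'w. snd (fst \<omega>) i = h0 \<and> fst (snd \<omega>) i = u}" for u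
  define P where "P t k u = map_pmf (\<lambda>\<omega>. io i (Suc t) k (Zt G t \<omega> i)) (cond_pmf (E t k u) (B u))" for t k u
  define r where "r j t k u = max (-1) (min 1 (measure_pmf.expectation (cond_pmf (E t k u) (B u)) (\<lambda>\<omega>. Rt G t \<omega> j)))" for j t k u
  define \<tau> :: "('x \<times> ('p \<Rightarrow> ('h, 'z) hist)) \<times> ('p \<Rightarrow> 'u) \<times> 'w \<Rightarrow> _"
    where "\<tau> \<omega> = ((fst (fst \<omega>), (snd (fst \<omega>))(i := h0)), snd \<omega>)" for \<omega>
  have core: "map_pmf \<tau> (cond_pmf (stage_dist G (gmi(i:=gi)) t) {\<omega>. snd (fst \<omega>) i = h \<and> fst (snd \<omega>) i = u})
              = cond_pmf (E t (compress io1 io i h) u) (B u) \<and> length (snd h) = t - 1"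
    if giv: "valid_strat G i gi" and tT: "t \<in> {1..horizon G}"
      and pos: "measure_pmf.prob (stage_dist G (gmi(i:=gi)) t) {\<omega>. snd (fst \<omega>) i = h \<and> fst (snd \<omega>) i = u} > 0"
    for gi t h u
  proof -
    define g where "g = gmi(i:=gi)"
    define S where "S = state_dist G g t"
    define D where "D = stage_dist G g t"
    define A where "A = {\<omega> :: ('x \<times> ('p \<Rightarrow> ('h, 'z) hist)) \<times> ('p \<Rightarrow> 'u) \<times> 'w. snd (fst \<omega>) i = h \<and> fst (snd \<omega>) i = u}"
    define k where "k = compress io1 io i h"
    define K where "K = {s :: 'x \<times> ('p \<Rightarrow> ('h, 'z) hist). compress io1 io i (snd s i) = k}"
    have DS: "D = stage_of G g t S" by (simp add: D_def S_def stage_dist_def)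
    have posA: "measure_pmf.prob D A > 0" using pos by (simp add: D_def A_def g_def)
    then have "measure_pmf.prob D A \<noteq> 0" by simp
    then have "set_pmf D \<inter> A \<noteq> {}" by (simp add: measure_pmf_zero_iff)
    then obtain \<omega>0 where o0: "\<omega>0 \<in> set_pmf D" "\<omega>0 \<in> A" by blast
    have s0: "fst \<omega>0 \<in> set_pmf S" using set_stage_of[OF o0(1)[unfolded DS]] .
    have hh: "snd (fst \<omega>0) i = h" using o0(2) unfolding A_def by blast
    have len: "length (snd h) = t - 1"
      using length_state[OF s0[unfolded S_def], of i] unfolding hh .
    have K0: "fst \<omega>0 \<in> K" unfolding K_def k_def using hh by blast
    have posK: "measure_pmf.prob S K > 0" using measure_pmf_posI[OF s0 K0] .
    have neK: "set_pmf S \<inter> K \<noteq> {}" using s0 K0 by blast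
    have gvalid: "\<forall>j. valid_strat G j (g j)" using gv giv by (simp add: g_def)
    have fac: "pmf (cond_pmf S K) (x, H) = pmf (F gi t k) (H i) * pmf (\<Phi> (gmi(i := undefined)) t k) (x, H(i := undefined))"
      for x H
    proof -
      have inst: "0 < measure_pmf.prob S K \<longrightarrow> (\<forall>x H. pmf (cond_pmf S K) (x, H) = pmf (F (g i) t k) (H i) * pmf (\<Phi> (g(i := undefined)) t k) (x, H(i := undefined)))"
        using F\<Phi>[rule_format, OF gvalid[rule_format] tT, of k] unfolding Let_def S_def K_def .
      have g1: "g i = gi" and g2: "g(i := undefined) = gmi(i := undefined)" by (simp_all add: g_def)
      show ?thesis using inst posK unfolding g1 g2 by blast
    qed
    define c where "c = measure_pmf.prob S K * pmf (F gi t k) h * pmf (gi t h) u"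
    have eq: "pmf D \<omega> = c * pmf (E t k u) (\<tau> \<omega>)" if "\<omega> \<in> A" for \<omega>
    proof -
      obtain x H U w where o: "\<omega> = ((x, H), U, w)" by (metis prod.collapse)
      have Hi: "H i = h" and Ui: "U i = u" using that o by (auto simp: A_def)
      have "(x, H) \<in> K" using Hi by (simp add: K_def k_def)
      then have pS: "pmf S (x, H) = measure_pmf.prob S K * (pmf (F gi t k) h * pmf (\<Phi> (gmi(i := undefined)) t k) (x, H(i := undefined)))"
        using fac[of x H] pmf_cond[OF neK, of "(x, H)"] posK Hi by (simp add: field_simps)
      have pr1: "(\<Prod>j\<in>UNIV. pmf (g j t (H j)) (U j)) = pmf (gi t h) u * (\<Prod>j\<in>UNIV - {i}. pmf (gmi j t (H j)) (U j))"
        by (subst prod.remove[of _ i]) (auto simp: g_def Hi Ui intro!: prod.cong)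
      have pr2: "(\<Prod>j\<in>UNIV. pmf ((gmi(i := (\<lambda>t h. return_pmf u))) j t ((H(i := h0)) j)) (U j)) = (\<Prod>j\<in>UNIV - {i}. pmf (gmi j t (H j)) (U j))"
        by (subst prod.remove[of _ i]) (auto simp: Ui intro!: prod.cong)
      show ?thesis
        unfolding DS o E_def \<tau>_def
        apply (simp only: pmf_stage_of pmf_joint fst_conv snd_conv)
        apply (simp only: pS pr1 pr2 c_def)
        by (simp add: h0_def ac_simps)
    qed
    have bij: "bij_betw \<tau> A (B u)"
      by (rule bij_betwI[where g="\<lambda>\<omega>. ((fst (fst \<omega>), (snd (fst \<omega>))(i := h)), snd \<omega>)"]) (auto simp: \<tau>_def A_def B_def)
    have "map_pmf \<tau> (cond_pmf D A) = cond_pmf (E t k u) (B u)"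
      by (rule cond_transfer[OF bij eq posA])
    then show ?thesis using len by (simp add: D_def A_def g_def k_def)
  qed
  show "info_state G io1 io i gmi"
    unfolding info_state_def Let_def
  proof (intro exI[where x=P] exI[where x=r] conjI allI impI ballI)
    fix j t k u show "\<bar>r j t k u\<bar> \<le> 1" by (simp add: r_def)
  next
    fix gi t h u k'
    assume giv: "valid_strat G i gi" and tT: "t \<in> {1..horizon G}"
      and pos: "measure_pmf.prob (stage_dist G (gmi(i:=gi)) t) {\<omega>. snd (fst \<omega>) i = h \<and> fst (snd \<omega>) i = u} > 0"
    note c = core[OF giv tT pos]
    have "pmf (P t (compress io1 io i h) u) k' = measure_pmf.prob (map_pmf \<tau> (cond_pmf (stage_dist G (gmi(i:=gi)) t) {\<omega>. snd (fst \<omega>) i = h \<and> fst (snd \<omega>) i = u}))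
           ((\<lambda>\<omega>. io i (Suc t) (compress io1 io i h) (Zt G t \<omega> i)) -` {k'})"
      using c by (simp add: P_def pmf_map)
    also have "\<dots> = measure_pmf.prob (cond_pmf (stage_dist G (gmi(i:=gi)) t) {\<omega>. snd (fst \<omega>) i = h \<and> fst (snd \<omega>) i = u})
           {\<omega>. compress io1 io i (fst h, snd h @ [Zt G t \<omega> i]) = k'}"
    proof -
      have "Suc (Suc (length (snd h))) = Suc t" using c tT by simp
      then show ?thesis
        by (simp add: compress_snoc \<tau>_def Zt_def split_beta vimage_def)
    qed
    finally show "measure_pmf.prob (cond_pmf (stage_dist G (gmi(i:=gi)) t) {\<omega>. snd (fst \<omega>) i = h \<and> fst (snd \<omega>) i = u})
           {\<omega>. compress io1 io i (fst h, snd h @ [Zt G t \<omega> i]) = k'} = pmf (P t (compress io1 io i h) u) k'"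
      by simp
  next
    fix gi t h u j
    assume giv: "valid_strat G i gi" and tT: "t \<in> {1..horizon G}"
      and pos: "measure_pmf.prob (stage_dist G (gmi(i:=gi)) t) {\<omega>. snd (fst \<omega>) i = h \<and> fst (snd \<omega>) i = u} > 0"
    note c = core[OF giv tT pos]
    define M where "M = cond_pmf (stage_dist G (gmi(i:=gi)) t) {\<omega>. snd (fst \<omega>) i = h \<and> fst (snd \<omega>) i = u}"
    have bnd: "\<bar>Rt G t \<omega> j\<bar> \<le> 1" for \<omega>
      using rewards_bounded tT by (auto simp: Rt_def split: prod.splits)
    have int: "integrable (measure_pmf M) (\<lambda>\<omega>. Rt G t \<omega> j)"
      by (rule measure_pmf.integrable_const_bound[where B=1]) (auto simp: bnd)
    have lo: "-1 \<le> measure_pmf.expectation M (\<lambda>\<omega>. Rt G t \<omega> j)"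
      by (rule measure_pmf.integral_ge_const[OF int]) (use bnd in \<open>auto simp: abs_le_iff\<close>)
    have hi: "measure_pmf.expectation M (\<lambda>\<omega>. Rt G t \<omega> j) \<le> 1"
      by (rule measure_pmf.integral_le_const[OF int]) (use bnd in \<open>auto simp: abs_le_iff\<close>)
    have "measure_pmf.expectation (cond_pmf (E t (compress io1 io i h) u) (B u)) (\<lambda>\<omega>. Rt G t \<omega> j)
          = measure_pmf.expectation M (\<lambda>\<omega>. Rt G t (\<tau> \<omega>) j)"
    proof -
      have e: "cond_pmf (E t (compress io1 io i h) u) (B u) = map_pmf \<tau> M" using c by (simp add: M_def)
      show ?thesis unfolding e by simp
    qed
    also have "\<dots> = measure_pmf.expectation M (\<lambda>\<omega>. Rt G t \<omega> j)"
      by (simp add: \<tau>_def Rt_def split_beta)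
    finally show "measure_pmf.expectation (cond_pmf (stage_dist G (gmi(i:=gi)) t) {\<omega>. snd (fst \<omega>) i = h \<and> fst (snd \<omega>) i = u}) (\<lambda>\<omega>. Rt G t \<omega> j)
          = r j t (compress io1 io i h) u"
      using lo hi by (simp add: r_def M_def[symmetric])
  qed
qed

end
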